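(* Fix $k\ge1$. For every $k$-bounded composition $\alpha$, $\chi(\mathbf{S}^{(k)}_\alpha)=s^{(k)}_{\lambda(\alpha)}$.
   Context: Compositions are finite sequences of positive integers (possibly empty $\emptyset$); $k$-bounded means all parts $\le k$; $\lambda(\alpha)$ is the partition obtained by sorting the parts of $\alpha$ decreasingly. $\mathsf{NSym}=\mathbb{Q}\langle H_1,H_2,\dots\rangle$ (noncommuting), $\mathsf{NSym}_{(k)}$ its subalgebra generated by $H_1,\dots,H_k$. $\chi:\mathsf{NSym}\to\mathsf{Sym}$ is the algebra homomorphism with $H_i\mapsto h_i$ (complete homogeneous symmetric function), so $\chi(H_{\alpha_1}\cdots H_{\alpha_m})=h_{\lambda(\alpha)}$. $k$-conjugation: hook length of cell $(i,j)$ of $\kappa$ is $\kappa_i-j+\kappa'_j-i+1$; a $(k+1)$-core has no cell of hook length $k+1$; $p(\kappa)$ has $i$-th part the number of cells in row $i$ with hook length $\le k$; $p$ is a bijection from $(k+1)$-cores to $k$-bounded partitions with inverse $c$; $\lambda^{\omega_k}=p(c(\lambda)')$. For $k$-bounded partitions $\mu\subseteq\lambda$, $\lambda/\mu$ is a horizontal $k$-strip if no two of its cells share a column, and $\mu^{\omega_k}\subseteq\lambda^{\omega_k}$ with no two cells of $\lambda^{\omega_k}/\mu^{\omega_k}$ in the same row; its size is $|\lambda|-|\mu|$. The $k$-Schur functions $\{s^{(k)}_\lambda\}_{\lambda\ k\text{-bounded}}$ are the basis of $\mathsf{Sym}_{(k)}=\mathbb{Q}[h_1,\dots,h_k]$ with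 $s^{(k)}_\emptyset=1$ and $h_i s^{(k)}_\lambda=\sum_\mu s^{(k)}_\mu$ for $1\le i\le k$, summed over $k$-bounded $\mu$ with $\mu/\lambda$ a horizontal $k$-strip of size $i$. Box-adding operators: $t_1(\alpha)=[1,\alpha_1,\dots,\alpha_m]$; for $i\ge2$, $t_i(\alpha)$ replaces the leftmost part of $\alpha$ equal to $i-1$ by $i$ (undefined if none). $\beta//\alpha$ is a horizontal composition strip of size $n$ if $\beta=t_{i_n}\cdots t_{i_1}(\alpha)$ with $1\le i_1<\cdots<i_n$; for $k$-bounded $\alpha,\beta$ it is a horizontal $k$-composition strip if moreover $\lambda(\beta)/\lambda(\alpha)$ is a horizontal $k$-strip. $\{\mathbf{S}^{(k)}_\alpha\}$ is the unique basis of $\mathsf{NSym}_{(k)}$ with $\mathbf{S}^{(k)}_\emptyset=1$ and $H_i\mathbf{S}^{(k)}_\alpha=\sum_\beta\mathbf{S}^{(k)}_\beta$ ($1\le i\le k$) over $\beta$ with $\beta//\alpha$ a horizontal $k$-composition strip of size $i$. *)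

theory Defs
  imports Complex_Main "HOL-Library.Multiset" "HOL-Library.Function_Algebras"
begin

definition is_composition :: "nat list \<Rightarrow> bool" where
  "is_composition \<alpha> \<longleftrightarrow> (\<forall>x\<in>set \<alpha>. 0 < x)"

definition kcomp :: "nat \<Rightarrow> nat list \<Rightarrow> bool" where
  "kcomp k \<alpha> \<longleftrightarrow> (\<forall>x\<in>set \<alpha>. 0 < x \<and> x \<le> k)"

definition is_partition :: "nat list \<Rightarrow> bool" where
  "is_partition \<kappa> \<longleftrightarrow> sorted_wrt (\<ge>) \<kappa> \<and> (\<forall>x\<in>set \<kappa>. 0 < x)"

definition kpart :: "nat \<Rightarrow> nat list \<Rightarrow> bool" where
  "kpart k la \<longleftrightarrow> is_partition la \<and> (\<forall>x\<in>set la. x \<le> k)"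

definition lam :: "nat list \<Rightarrow> nat list" where
  "lam \<alpha> = rev (sort \<alpha>)"

text \<open>Cells (i,j), 1-indexed: row i has kappa_i = kappa!(i-1) cells.\<close>
definition cells :: "nat list \<Rightarrow> (nat \<times> nat) set" where
  "cells \<kappa> = {(i,j). 1 \<le> i \<and> i \<le> length \<kappa> \<and> 1 \<le> j \<and> j \<le> \<kappa> ! (i - 1)}"

definition colLen :: "nat list \<Rightarrow> nat \<Rightarrow> nat" where
  "colLen \<kappa> j = length (filter (\<lambda>x. j \<le> x) \<kappa>)"

definition conj :: "nat list \<Rightarrow> nat list" where
  "conj \<kappa> = map (colLen \<kappa>) [1..<Suc (foldr max \<kappa> 0)]"

definition hook :: "nat list \<Rightarrow> nat \<Rightarrow> nat \<Rightarrow> nat" where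
  "hook \<kappa> i j = (\<kappa> ! (i - 1) - j) + (colLen \<kappa> j - i) + 1"

definition is_core :: "nat \<Rightarrow> nat list \<Rightarrow> bool" where
  "is_core k \<kappa> \<longleftrightarrow> is_partition \<kappa> \<and> (\<forall>(i,j)\<in>cells \<kappa>. hook \<kappa> i j \<noteq> k + 1)"

definition pk :: "nat \<Rightarrow> nat list \<Rightarrow> nat list" where
  "pk k \<kappa> = map (\<lambda>i. card {j. (i,j) \<in> cells \<kappa> \<and> hook \<kappa> i j \<le> k}) [1..<Suc (length \<kappa>)]"

definition ck :: "nat \<Rightarrow> nat list \<Rightarrow> nat list" where
  "ck k la = (THE \<kappa>. is_core k \<kappa> \<and> pk k \<kappa> = la)"

definition omega :: "nat \<Rightarrow> nat list \<Rightarrow> nat list" where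
  "omega k la = pk k (conj (ck k la))"

definition hkstrip :: "nat \<Rightarrow> nat list \<Rightarrow> nat list \<Rightarrow> bool" where
  "hkstrip k la \<mu> \<longleftrightarrow> kpart k la \<and> kpart k \<mu> \<and> cells \<mu> \<subseteq> cells la \<and>
     (\<forall>c\<in>cells la - cells \<mu>. \<forall>d\<in>cells la - cells \<mu>. snd c = snd d \<longrightarrow> c = d) \<and>
     cells (omega k \<mu>) \<subseteq> cells (omega k la) \<and>
     (\<forall>c\<in>cells (omega k la) - cells (omega k \<mu>). \<forall>d\<in>cells (omega k la) - cells (omega k \<mu>).
        fst c = fst d \<longrightarrow> c = d)"

fun replace_first :: "nat \<Rightarrow> nat \<Rightarrow> nat list \<Rightarrow> nat list option" where
  "replace_first a b [] = None"
| "replace_first a b (x # xs) =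
     (if x = a then Some (b # xs) else map_option ((#) x) (replace_first a b xs))"

definition tbox :: "nat \<Rightarrow> nat list \<Rightarrow> nat list option" where
  "tbox i \<alpha> = (if i = 1 then Some (1 # \<alpha>)
               else if 2 \<le> i then replace_first (i - 1) i \<alpha> else None)"

fun apply_ts :: "nat list \<Rightarrow> nat list \<Rightarrow> nat list option" where
  "apply_ts [] \<alpha> = Some \<alpha>"
| "apply_ts (i # is) \<alpha> = Option.bind (tbox i \<alpha>) (apply_ts is)"

definition hcstrip :: "nat \<Rightarrow> nat list \<Rightarrow> nat list \<Rightarrow> bool" where
  "hcstrip n \<beta> \<alpha> \<longleftrightarrow> (\<exists>is. length is = n \<and> sorted_wrt (<) is \<and> (\<forall>i\<in>set is. 1 \<le> i)
                           \<and> apply_ts is \<alpha> = Some \<beta>)"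

definition hkcstrip :: "nat \<Rightarrow> nat \<Rightarrow> nat list \<Rightarrow> nat list \<Rightarrow> bool" where
  "hkcstrip k n \<beta> \<alpha> \<longleftrightarrow> kcomp k \<alpha> \<and> kcomp k \<beta> \<and> hcstrip n \<beta> \<alpha> \<and> hkstrip k (lam \<beta>) (lam \<alpha>)"

text \<open>NSym: elements are finitely supported coefficient functions on words
  H_{w1}...H_{wm} (w a composition). Sym: finitely supported coefficient functions
  on the basis h_lambda, lambda encoded as a multiset of positive parts.\<close>

definition fin_supp :: "('a \<Rightarrow> rat) \<Rightarrow> bool" where
  "fin_supp f \<longleftrightarrow> finite {x. f x \<noteq> 0}"

definition NSym_k :: "nat \<Rightarrow> (nat list \<Rightarrow> rat) set" where
  "NSym_k k = {f. fin_supp f \<and> (\<forall>w. f w \<noteq> 0 \<longrightarrow> kcomp k w)}"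

definition Sym_k :: "nat \<Rightarrow> (nat multiset \<Rightarrow> rat) set" where
  "Sym_k k = {f. fin_supp f \<and> (\<forall>m. f m \<noteq> 0 \<longrightarrow> (\<forall>x\<in>#m. 0 < x \<and> x \<le> k))}"

definition oneNS :: "nat list \<Rightarrow> rat" where
  "oneNS w = (if w = [] then 1 else 0)"

definition oneS :: "nat multiset \<Rightarrow> rat" where
  "oneS m = (if m = {#} then 1 else 0)"

definition mulH :: "nat \<Rightarrow> (nat list \<Rightarrow> rat) \<Rightarrow> (nat list \<Rightarrow> rat)" where
  "mulH i f = (\<lambda>w. case w of [] \<Rightarrow> 0 | a # v \<Rightarrow> if a = i then f v else 0)"

definition mulh :: "nat \<Rightarrow> (nat multiset \<Rightarrow> rat) \<Rightarrow> (nat multiset \<Rightarrow> rat)" where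
  "mulh i f = (\<lambda>m. if i \<in># m then f (m - {#i#}) else 0)"

text \<open>chi: H_{a1}...H_{am} \<mapsto> h_{lambda(a)}, extended linearly\<close>
definition chi :: "(nat list \<Rightarrow> rat) \<Rightarrow> (nat multiset \<Rightarrow> rat)" where
  "chi f = (\<lambda>m. \<Sum>w\<in>{w. mset w = m}. f w)"

definition is_basis :: "('x \<Rightarrow> rat) set \<Rightarrow> 'i set \<Rightarrow> ('i \<Rightarrow> 'x \<Rightarrow> rat) \<Rightarrow> bool" where
  "is_basis V I b \<longleftrightarrow> (\<forall>i\<in>I. b i \<in> V) \<and>
     (\<forall>f\<in>V. \<exists>!c. {i. c i \<noteq> 0} \<subseteq> I \<and> finite {i. c i \<noteq> 0} \<and>
                   f = (\<Sum>i\<in>{i. c i \<noteq> 0}. (\<lambda>x. c i * b i x)))"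

end

theory Submission imports Defs begin

lemma colLen_mset: "colLen x c = size (filter_mset (\<lambda>e. c \<le> e) (mset x))"
  unfolding colLen_def by (metis mset_filter size_mset)

lemma colLen_mset_eq: "mset x = mset y \<Longrightarrow> colLen x c = colLen y c"
  by (simp add: colLen_mset)

lemma replace_first_Some:
  "a \<in> set x \<Longrightarrow> \<exists>y. replace_first a b x = Some y"
  by (induction x) auto

lemma replace_first_mset:
  "replace_first a b x = Some y \<Longrightarrow> a \<in> set x \<and> mset y = add_mset b (mset x - {#a#})"
proof (induction x arbitrary: y)
  case Nil then show ?case by simp
next
  case (Cons z zs)
  show ?case
  proof (cases "z = a")
    case True then show ?thesis using Cons.prems by auto
  next
    case False
    then obtain y' where y': "replace_first a b zs = Some y'" "y = z # y'"
      using Cons.prems by auto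
    have "a \<in> set zs" "mset y' = add_mset b (mset zs - {#a#})" using Cons.IH[OF y'(1)] by auto
    then show ?thesis using y' False by (auto simp: add_mset_commute)
  qed
qed

lemma tbox_props:
  assumes "tbox j x = Some y"
  shows "1 \<le> j \<and> mset y = add_mset j (mset x - (if j = 1 then {#} else {#j - 1#}))
     \<and> (j \<ge> 2 \<longrightarrow> j - 1 \<in> set x)"
proof (cases "j = 1")
  case True then show ?thesis using assms by (auto simp: tbox_def)
next
  case False
  then have j2: "2 \<le> j" "replace_first (j-1) j x = Some y" using assms
    by (auto simp: tbox_def split: if_splits)
  then show ?thesis using replace_first_mset[OF j2(2)] False by auto
qed

lemma colLen_tbox:
  assumes "tbox j x = Some y" "1 \<le> c"
  shows "colLen y c = colLen x c + (if c = j then 1 else 0)"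
proof -
  note t = tbox_props[OF assms(1)]
  show ?thesis
  proof (cases "j = 1")
    case True then show ?thesis using t assms(2) by (auto simp: colLen_mset)
  next
    case False
    then have jm: "j - 1 \<in># mset x" "mset y = add_mset j (mset x - {#j - 1#})" using t by auto
    define M0 where "M0 = mset x - {#j - 1#}"
    have mx: "mset x = add_mset (j - 1) M0" using jm(1) by (simp add: M0_def)
    have my: "mset y = add_mset j M0" using jm(2) by (simp add: M0_def)
    show ?thesis using False t unfolding colLen_mset mx my by auto
  qed
qed

lemma sum_tbox:
  assumes "tbox j x = Some y"
  shows "sum_list y = sum_list x + 1"
proof -
  note t = tbox_props[OF assms]
  show ?thesis
  proof (cases "j = 1")
    case True
    then have "mset y = add_mset 1 (mset x)" using t by simp
    then have "sum_mset (mset y) = 1 + sum_mset (mset x)" by simp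
    then show ?thesis by (simp add: sum_mset_sum_list)
  next
    case False
    then have jm: "j - 1 \<in># mset x" "mset y = add_mset j (mset x - {#j - 1#})" using t by auto
    define M0 where "M0 = mset x - {#j - 1#}"
    have mx: "mset x = add_mset (j - 1) M0" using jm(1) by (simp add: M0_def)
    have my: "mset y = add_mset j M0" using jm(2) by (simp add: M0_def)
    have "sum_list x = sum_mset (mset x)" by (simp add: sum_mset_sum_list)
    also have "\<dots> = (j - 1) + sum_mset M0" unfolding mx by simp
    finally have sx: "sum_list x = (j - 1) + sum_mset M0" .
    have "sum_list y = sum_mset (mset y)" by (simp add: sum_mset_sum_list)
    also have "\<dots> = j + sum_mset M0" unfolding my by simp
    finally have sy: "sum_list y = j + sum_mset M0" .
    show ?thesis using sx sy t False by simp
  qed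
qed

lemma pos_tbox:
  assumes "tbox j x = Some y" "\<forall>e\<in>set x. 0 < e"
  shows "\<forall>e\<in>set y. 0 < e"
proof -
  note t = tbox_props[OF assms(1)]
  have "set y \<subseteq> insert j (set x)"
  proof
    fix e assume "e \<in> set y"
    then have "e \<in># mset y" by simp
    then show "e \<in> insert j (set x)" using t by (auto dest: in_diffD split: if_splits)
  qed
  then show ?thesis using assms(2) t by auto
qed

lemma apply_ts_props:
  "apply_ts I x = Some y \<Longrightarrow> (\<forall>i\<in>set I. 1 \<le> i) \<and>
     (\<forall>c\<ge>1. colLen y c = colLen x c + count (mset I) c) \<and> sum_list y = sum_list x + length I
     \<and> ((\<forall>e\<in>set x. 0 < e) \<longrightarrow> (\<forall>e\<in>set y. 0 < e))"
proof (induction I arbitrary: x)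
  case Nil then show ?case by simp
next
  case (Cons j I)
  from Cons.prems obtain z where z: "tbox j x = Some z" "apply_ts I z = Some y"
    by (cases "tbox j x") auto
  note IH = Cons.IH[OF z(2)]
  show ?case using IH colLen_tbox[OF z(1)] sum_tbox[OF z(1)] pos_tbox[OF z(1)] tbox_props[OF z(1)]
    by auto
qed


lemma dc_card:
  fixes S :: "nat set"
  assumes "finite S" "\<And>j j'. j \<in> S \<Longrightarrow> j' \<le> j \<Longrightarrow> j' \<in> S"
  shows "j \<in> S \<longleftrightarrow> j < card S"
proof
  assume "j \<in> S"
  then have "{..j} \<subseteq> S" using assms(2) by auto
  then have "card {..j} \<le> card S" using assms(1) by (rule card_mono[rotated])
  then show "j < card S" by simp
next
  assume "j < card S"
  show "j \<in> S"
  proof (rule ccontr)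
    assume "j \<notin> S"
    then have "S \<subseteq> {..<j}" using assms(2) by (metis lessThan_iff not_le_imp_less subsetI)
    then have "card S \<le> card {..<j}" by (rule card_mono[rotated]) simp
    then show False using \<open>j < card S\<close> by simp
  qed
qed

lemma cells_iff:
  assumes "is_partition \<kappa>" "1 \<le> r" "1 \<le> c"
  shows "(r, c) \<in> cells \<kappa> \<longleftrightarrow> r \<le> colLen \<kappa> c"
proof -
  define S where "S = {j. j < length \<kappa> \<and> c \<le> \<kappa> ! j}"
  have cl: "colLen \<kappa> c = card S" unfolding colLen_def S_def by (rule length_filter_conv_card)
  have sw: "sorted_wrt (\<ge>) \<kappa>" using assms(1) by (simp add: is_partition_def)
  have dcS: "j' \<in> S" if "j \<in> S" "j' \<le> j" for j j'
  proof (cases "j' = j")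
    case False
    then have "\<kappa> ! j' \<ge> \<kappa> ! j" using sorted_wrt_nth_less[OF sw, of j' j] that by (auto simp: S_def)
    then show ?thesis using that by (auto simp: S_def)
  qed (use that in auto)
  have c1: "(r, c) \<in> cells \<kappa> \<longleftrightarrow> r - 1 \<in> S" using assms(2,3) by (auto simp: cells_def S_def)
  have finS: "finite S" by (simp add: S_def)
  have "r - 1 \<in> S \<longleftrightarrow> r - 1 < card S" by (rule dc_card[OF finS dcS])
  with c1 show ?thesis using cl assms(2) by auto
qed

lemma colLen_antimono: "c \<le> d \<Longrightarrow> colLen x d \<le> colLen x c"
  unfolding colLen_def by (induction x) auto

lemma colLen_split: "colLen x a = colLen x (Suc a) + count (mset x) a"
  unfolding colLen_def count_mset by (induction x) auto

lemma exist_apply: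
  "sorted_wrt (<) I \<Longrightarrow> (\<forall>j\<in>set I. 1 \<le> j) \<Longrightarrow>
   (\<forall>c\<ge>1. T c = colLen x c + (if c \<in> set I then 1 else 0)) \<Longrightarrow>
   (\<forall>c d. 1 \<le> c \<longrightarrow> c \<le> d \<longrightarrow> T d \<le> T c) \<Longrightarrow>
   \<exists>y. apply_ts I x = Some y \<and> (\<forall>c\<ge>1. T c = colLen y c)"
proof (induction I arbitrary: x)
  case Nil then show ?case by simp
next
  case (Cons j I)
  have j1: "1 \<le> j" and notin: "j \<notin> set I" and Ij: "\<forall>i\<in>set I. j < i"
    using Cons.prems(1,2) by auto
  obtain z where z: "tbox j x = Some z"
  proof (cases "j = 1")
    case True then show ?thesis using that by (simp add: tbox_def)
  next
    case False
    then have j2: "2 \<le> j" using j1 by simp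
    have "j - 1 \<notin> set (j # I)" using Ij j2 by auto
    then have "T (j - 1) = colLen x (j - 1)" using Cons.prems(3) j2 by force
    moreover have "T j = colLen x j + 1" using Cons.prems(3) j1 by auto
    moreover have "T j \<le> T (j - 1)" using Cons.prems(4) j2 by auto
    ultimately have "colLen x j < colLen x (j - 1)" by simp
    then have "count (mset x) (j - 1) > 0" using colLen_split[of x "j - 1"] j2 by simp
    then have "j - 1 \<in> set x" by (metis count_eq_zero_iff less_irrefl set_mset_mset)
    then obtain y where "replace_first (j - 1) j x = Some y" using replace_first_Some by blast
    then show ?thesis using that j2 by (simp add: tbox_def)
  qed
  have "\<forall>c\<ge>1. T c = colLen z c + (if c \<in> set I then 1 else 0)"
    using Cons.prems(3) colLen_tbox[OF z] notin by auto
  then obtain y where "apply_ts I z = Some y" "\<forall>c\<ge>1. T c = colLen y c"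
    using Cons.IH[of z] Cons.prems(1,2,4) by auto
  then show ?case using z by auto
qed

lemma mset_eq_colLen:
  assumes "\<forall>e\<in>set a. 0 < e" "\<forall>e\<in>set b. 0 < e" "\<forall>c\<ge>1. colLen a c = colLen b c"
  shows "mset a = mset b"
proof (rule multiset_eqI)
  fix x
  show "count (mset a) x = count (mset b) x"
  proof (cases "x = 0")
    case True
    have "0 \<notin> set a" "0 \<notin> set b" using assms(1,2) by auto
    then show ?thesis using \<open>x = 0\<close> by (metis count_eq_zero_iff set_mset_mset)
  next
    case False
    then show ?thesis using colLen_split[of a x] colLen_split[of b x] assms(3)
      by (metis add_left_cancel le_add1 le_numeral_extra(2) not_less_eq_eq plus_1_eq_Suc
          One_nat_def not0_implies_Suc)
  qed
qed


lemma mset_lam[simp]: "mset (lam x) = mset x" by (simp add: lam_def)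
lemma sum_lam[simp]: "sum_list (lam x) = sum_list x"
  by (metis mset_lam sum_mset_sum_list)
lemma colLen_lam[simp]: "colLen (lam x) c = colLen x c"
  by (simp add: colLen_mset)
lemma set_lam[simp]: "set (lam x) = set x" by (simp add: lam_def)

lemma kpart_lam: "kcomp k g \<Longrightarrow> kpart k (lam g)"
  by (auto simp: kcomp_def kpart_def is_partition_def lam_def sorted_wrt_rev)

lemma C1:
  assumes "hkcstrip k i b g"
  shows "hkstrip k (lam b) (lam g) \<and> sum_list (lam b) - sum_list (lam g) = i"
proof -
  obtain I where I: "length I = i" "apply_ts I g = Some b"
    using assms by (auto simp: hkcstrip_def hcstrip_def)
  show ?thesis using apply_ts_props[OF I(2)] I(1) assms by (auto simp: hkcstrip_def)
qed

lemma C2: "inj_on lam {b. hkcstrip k i b g}"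
proof (rule inj_onI)
  fix b b' assume b: "b \<in> {b. hkcstrip k i b g}" and b': "b' \<in> {b. hkcstrip k i b g}"
    and eq: "lam b = lam b'"
  obtain I where I: "sorted_wrt (<) I" "\<forall>j\<in>set I. 1 \<le> j" "apply_ts I g = Some b"
    using b by (auto simp: hkcstrip_def hcstrip_def)
  obtain I' where I': "sorted_wrt (<) I'" "\<forall>j\<in>set I'. 1 \<le> j" "apply_ts I' g = Some b'"
    using b' by (auto simp: hkcstrip_def hcstrip_def)
  have cb: "colLen b c = colLen b' c" for c using eq by (metis colLen_lam)
  have "count (mset I) c = count (mset I') c" for c
  proof (cases "c \<ge> 1")
    case True
    then show ?thesis using apply_ts_props[OF I(3)] apply_ts_props[OF I'(3)] cb[of c] by auto
  next
    case False
    then have "c \<notin> set I" "c \<notin> set I'" using I(2) I'(2) by auto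
    then show ?thesis by (metis count_eq_zero_iff set_mset_mset)
  qed
  then have "mset I = mset I'" by (rule multiset_eqI)
  then have "I = I'"
    by (metis I(1) I'(1) properties_for_sort strict_sorted_imp_sorted)
  then show "b = b'" using I(3) I'(3) by simp
qed

lemma C3:
  assumes g: "kcomp k g" and mu: "hkstrip k mu (lam g)" "sum_list mu - sum_list (lam g) = i"
  shows "\<exists>b. hkcstrip k i b g \<and> lam b = mu"
proof -
  define l0 where "l0 = lam g"
  have kp: "kpart k mu" "kpart k l0" and sub: "cells l0 \<subseteq> cells mu"
    and col: "\<forall>c\<in>cells mu - cells l0. \<forall>d\<in>cells mu - cells l0. snd c = snd d \<longrightarrow> c = d"
    using mu(1) by (auto simp: hkstrip_def l0_def)
  have pm: "is_partition mu" and pl: "is_partition l0" using kp by (auto simp: kpart_def)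
  have lo: "colLen l0 c \<le> colLen mu c" if "1 \<le> c" for c
  proof (cases "colLen l0 c = 0")
    case False
    then have "(colLen l0 c, c) \<in> cells l0" using cells_iff[OF pl _ that] by simp
    then have "(colLen l0 c, c) \<in> cells mu" using sub by auto
    then show ?thesis using cells_iff[OF pm _ that] False by simp
  qed simp
  have hi: "colLen mu c \<le> colLen l0 c + 1" if "1 \<le> c" for c
  proof (rule ccontr)
    assume "\<not> ?thesis"
    then have h: "colLen l0 c + 2 \<le> colLen mu c" by simp
    let ?a = "(colLen l0 c + 1, c)" and ?b = "(colLen l0 c + 2, c)"
    have "?a \<in> cells mu - cells l0" "?b \<in> cells mu - cells l0"
      using cells_iff[OF pm _ that] cells_iff[OF pl _ that] h by auto
    then have "?a = ?b" using col by (metis snd_conv)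
    then show False by simp
  qed
  define Iset where "Iset = {c. 1 \<le> c \<and> c \<le> k \<and> colLen mu c = colLen l0 c + 1}"
  define I where "I = sorted_list_of_set Iset"
  have finI: "finite Iset" by (simp add: Iset_def)
  have setI: "set I = Iset" using finI by (simp add: I_def)
  have big: "colLen mu c = 0" if "k < c" for c
    using kp(1) that unfolding kpart_def colLen_def by (auto simp: filter_empty_conv)
  have T: "\<forall>c\<ge>1. colLen mu c = colLen g c + (if c \<in> set I then 1 else 0)"
  proof (intro allI impI)
    fix c :: nat assume c: "1 \<le> c"
    have "colLen l0 c = colLen g c" by (simp add: l0_def)
    moreover have "k < c \<Longrightarrow> colLen l0 c = 0" using lo[OF c] big by fastforce
    ultimately show "colLen mu c = colLen g c + (if c \<in> set I then 1 else 0)"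
      using lo[OF c] hi[OF c] big[of c] c unfolding setI Iset_def
      by (cases "k < c") auto
  qed
  have sI: "sorted_wrt (<) I" by (simp add: I_def strict_sorted_list_of_set)
  have I1: "\<forall>j\<in>set I. 1 \<le> j" using setI by (auto simp: Iset_def)
  obtain b where b: "apply_ts I g = Some b" "\<forall>c\<ge>1. colLen mu c = colLen b c"
    using exist_apply[OF sI I1 T] colLen_antimono by blast
  have gpos: "\<forall>e\<in>set g. 0 < e" using g by (auto simp: kcomp_def)
  note ap = apply_ts_props[OF b(1)]
  have mupos: "\<forall>e\<in>set mu. 0 < e" using pm by (auto simp: is_partition_def)
  have ms: "mset b = mset mu" using mset_eq_colLen[of b mu] ap gpos mupos b(2) by auto
  have "sort b = rev mu"
    using pm ms by (intro properties_for_sort) (auto simp: is_partition_def sorted_wrt_rev)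
  then have lb: "lam b = mu" by (simp add: lam_def)
  have "set b = set mu" using ms by (metis set_mset_mset)
  then have kb: "kcomp k b" using kp(1) by (auto simp: kcomp_def kpart_def is_partition_def)
  have "sum_list b = sum_list mu" using ms by (metis sum_mset_sum_list)
  then have "length I = i" using ap mu(2) by simp
  then have "hcstrip i b g" using sI I1 b(1) by (auto simp: hcstrip_def)
  then show ?thesis using g kb lb mu(1) by (auto simp: hkcstrip_def)
qed

lemma bij_part:
  assumes "kcomp k g"
  shows "lam ` {b. hkcstrip k i b g} = {mu. hkstrip k mu (lam g) \<and> sum_list mu - sum_list (lam g) = i}"
  using C1 C3[OF assms] by fastforce


lemma sum_fun_apply: "(\<Sum>i\<in>A. F i) x = (\<Sum>i\<in>A. F i x)"
  by (induction A rule: infinite_finite_induct) auto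

lemma supersum:
  assumes "finite U" "{i. a i \<noteq> 0} \<subseteq> U"
  shows "(\<Sum>i\<in>{i. a i \<noteq> 0}. a i * F i) = (\<Sum>i\<in>U. a i * (F i :: rat))"
  by (rule sum.mono_neutral_left) (use assms in auto)

definition Rel :: "nat \<Rightarrow> (nat list \<Rightarrow> nat list \<Rightarrow> rat) \<Rightarrow> (nat list \<Rightarrow> nat multiset \<Rightarrow> rat)
   \<Rightarrow> (nat list \<Rightarrow> rat) \<Rightarrow> (nat multiset \<Rightarrow> rat) \<Rightarrow> bool" where
  "Rel k S s f g \<longleftrightarrow> (\<exists>a. {i. a i \<noteq> 0} \<subseteq> {b. kcomp k b} \<and> finite {i. a i \<noteq> 0} \<and>
     (\<forall>x. f x = (\<Sum>i\<in>{i. a i \<noteq> 0}. a i * S i x)) \<and>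
     (\<forall>m. g m = (\<Sum>i\<in>{i. a i \<noteq> 0}. a i * s (lam i) m)))"

lemma Rel_zero: "Rel k S s (\<lambda>x. 0) (\<lambda>m. 0)"
  unfolding Rel_def by (rule exI[of _ "\<lambda>_. 0"]) auto

lemma Rel_basis: "kcomp k b \<Longrightarrow> Rel k S s (S b) (s (lam b))"
  unfolding Rel_def
proof (rule exI[of _ "\<lambda>i. if i = b then 1 else 0"])
  assume "kcomp k b"
  moreover have "{i. (if i = b then 1 else 0::rat) \<noteq> 0} = {b}" by auto
  ultimately show "{i. (if i = b then 1 else 0::rat) \<noteq> 0} \<subseteq> {b. kcomp k b} \<and>
    finite {i. (if i = b then 1 else 0::rat) \<noteq> 0} \<and>
    (\<forall>x. S b x = (\<Sum>i\<in>{i. (if i = b then 1 else 0::rat) \<noteq> 0}. (if i = b then 1 else 0) * S i x)) \<and>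
    (\<forall>m. s (lam b) m = (\<Sum>i\<in>{i. (if i = b then 1 else 0::rat) \<noteq> 0}. (if i = b then 1 else 0) * s (lam i) m))"
    by simp
qed

lemma Rel_scale:
  assumes "Rel k S s f g"
  shows "Rel k S s (\<lambda>x. c * f x) (\<lambda>m. c * g m)"
proof (cases "c = 0")
  case True then show ?thesis using Rel_zero by simp
next
  case False
  obtain a where a: "{i. a i \<noteq> 0} \<subseteq> {b. kcomp k b}" "finite {i. a i \<noteq> 0}"
    "\<forall>x. f x = (\<Sum>i\<in>{i. a i \<noteq> 0}. a i * S i x)" "\<forall>m. g m = (\<Sum>i\<in>{i. a i \<noteq> 0}. a i * s (lam i) m)"
    using assms unfolding Rel_def by blast
  have e: "{i. c * a i \<noteq> 0} = {i. a i \<noteq> 0}" using False by auto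
  show ?thesis unfolding Rel_def
    by (rule exI[of _ "\<lambda>i. c * a i"]) (use a False in \<open>auto simp: False sum_distrib_left mult.assoc\<close>)
qed

lemma Rel_add:
  assumes "Rel k S s f g" "Rel k S s f' g'"
  shows "Rel k S s (\<lambda>x. f x + f' x) (\<lambda>m. g m + g' m)"
proof -
  obtain a where a: "{i. a i \<noteq> 0} \<subseteq> {b. kcomp k b}" "finite {i. a i \<noteq> 0}"
    "\<forall>x. f x = (\<Sum>i\<in>{i. a i \<noteq> 0}. a i * S i x)" "\<forall>m. g m = (\<Sum>i\<in>{i. a i \<noteq> 0}. a i * s (lam i) m)"
    using assms(1) unfolding Rel_def by blast
  obtain a' where a': "{i. a' i \<noteq> 0} \<subseteq> {b. kcomp k b}" "finite {i. a' i \<noteq> 0}"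
    "\<forall>x. f' x = (\<Sum>i\<in>{i. a' i \<noteq> 0}. a' i * S i x)" "\<forall>m. g' m = (\<Sum>i\<in>{i. a' i \<noteq> 0}. a' i * s (lam i) m)"
    using assms(2) unfolding Rel_def by blast
  define U where "U = {i. a i \<noteq> 0} \<union> {i. a' i \<noteq> 0}"
  define b where "b = (\<lambda>i. a i + a' i)"
  have fU: "finite U" using a(2) a'(2) by (simp add: U_def)
  have sa: "{i. a i \<noteq> 0} \<subseteq> U" "{i. a' i \<noteq> 0} \<subseteq> U" "{i. b i \<noteq> 0} \<subseteq> U"
    by (auto simp: U_def b_def)
  have "f x + f' x = (\<Sum>i\<in>{i. b i \<noteq> 0}. b i * S i x)" for x
    using a(3) a'(3) supersum[OF fU sa(1), of "\<lambda>i. S i x"] supersum[OF fU sa(2), of "\<lambda>i. S i x"]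
      supersum[OF fU sa(3), of "\<lambda>i. S i x"]
    by (simp add: b_def distrib_right sum.distrib)
  moreover have "g m + g' m = (\<Sum>i\<in>{i. b i \<noteq> 0}. b i * s (lam i) m)" for m
    using a(4) a'(4) supersum[OF fU sa(1), of "\<lambda>i. s (lam i) m"] supersum[OF fU sa(2), of "\<lambda>i. s (lam i) m"]
      supersum[OF fU sa(3), of "\<lambda>i. s (lam i) m"]
    by (simp add: b_def distrib_right sum.distrib)
  moreover have "{i. b i \<noteq> 0} \<subseteq> {b. kcomp k b}" "finite {i. b i \<noteq> 0}"
    using sa(3) fU a(1) a'(1) by (auto simp: U_def intro: finite_subset)
  ultimately show ?thesis unfolding Rel_def by blast
qed

lemma Rel_sum:
  assumes "\<And>j. j \<in> A \<Longrightarrow> Rel k S s (F j) (G j)"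
  shows "Rel k S s (\<lambda>x. \<Sum>j\<in>A. F j x) (\<lambda>m. \<Sum>j\<in>A. G j m)"
  using assms
proof (induction A rule: infinite_finite_induct)
  case (infinite A) then show ?case using Rel_zero by simp
next
  case empty then show ?case using Rel_zero by simp
next
  case (insert j A)
  have "Rel k S s (\<lambda>x. F j x + (\<Sum>j\<in>A. F j x)) (\<lambda>m. G j m + (\<Sum>j\<in>A. G j m))"
    using insert by (intro Rel_add) auto
  then show ?case using insert(1,2) by simp
qed

lemma Rel_cong: "Rel k S s f g \<Longrightarrow> f = f' \<Longrightarrow> g = g' \<Longrightarrow> Rel k S s f' g'" by simp

lemma chi_scale: "chi (\<lambda>x. c * f x) = (\<lambda>m. c * chi f m)"
  by (simp add: chi_def sum_distrib_left)

lemma chi_sum: "chi (\<lambda>x. \<Sum>j\<in>A. F j x) = (\<lambda>m. \<Sum>j\<in>A. chi (F j) m)"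
  unfolding chi_def by (rule ext, rule sum.swap)

lemma finite_mset_eq: "finite {w. mset w = m}"
  by (metis ex_mset mset_eq_finite)

lemma chi_mulH: "chi (mulH i f) = mulh i (chi f)"
proof
  fix m
  show "chi (mulH i f) m = mulh i (chi f) m"
  proof (cases "i \<in># m")
    case False
    have "mulH i f w = 0" if "mset w = m" for w
      using that False by (cases w) (auto simp: mulH_def)
    then show ?thesis using False by (simp add: chi_def mulh_def)
  next
    case True
    let ?T = "(\<lambda>v. i # v) ` {v. mset v = m - {#i#}}"
    have Tsub: "?T \<subseteq> {w. mset w = m}" using True by auto
    have "chi (mulH i f) m = (\<Sum>w\<in>?T. mulH i f w)"
      unfolding chi_def
    proof (rule sum.mono_neutral_right[OF finite_mset_eq Tsub])
      show "\<forall>w\<in>{w. mset w = m} - ?T. mulH i f w = 0"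
      proof
        fix w assume w: "w \<in> {w. mset w = m} - ?T"
        show "mulH i f w = 0"
        proof (cases w)
          case (Cons a v)
          show ?thesis
          proof (cases "a = i")
            case True
            then have "mset v = m - {#i#}" using w Cons by auto
            then show ?thesis using w Cons True by auto
          qed (simp add: mulH_def Cons)
        qed (simp add: mulH_def)
      qed
    qed
    also have "\<dots> = (\<Sum>v\<in>{v. mset v = m - {#i#}}. f v)"
      by (subst sum.reindex) (auto simp: inj_on_def mulH_def)
    finally show ?thesis using True by (simp add: chi_def mulh_def)
  qed
qed

lemma mulH_sum: "mulH i (\<lambda>x. \<Sum>j\<in>A. F j x) = (\<lambda>v. \<Sum>j\<in>A. mulH i (F j) v)"
  by (rule ext) (auto simp: mulH_def split: list.splits)

lemma mulH_scale: "mulH i (\<lambda>x. c * f x) = (\<lambda>v. c * mulH i f v)"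
  by (rule ext) (auto simp: mulH_def split: list.splits)

lemma mulh_sum: "mulh i (\<lambda>x. \<Sum>j\<in>A. F j x) = (\<lambda>v. \<Sum>j\<in>A. mulh i (F j) v)"
  by (rule ext) (auto simp: mulh_def)

lemma mulh_scale: "mulh i (\<lambda>x. c * f x) = (\<lambda>v. c * mulh i f v)"
  by (rule ext) (auto simp: mulh_def)

lemma chi_one: "chi oneNS = oneS"
proof
  fix m
  show "chi oneNS m = oneS m"
  proof (cases "m = {#}")
    case True
    then have "{w. mset w = m} = {[]}" by auto
    then show ?thesis using True by (simp add: chi_def oneNS_def oneS_def)
  next
    case False
    then show ?thesis by (auto simp: chi_def oneNS_def oneS_def intro!: sum.neutral)
  qed
qed


lemma G_step:
  assumes S_pieri: "\<forall>\<gamma>. kcomp k \<gamma> \<longrightarrow> (\<forall>i\<in>{1..k}.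
                    mulH i (S \<gamma>) = (\<Sum>\<beta>\<in>{\<beta>. hkcstrip k i \<beta> \<gamma>}. S \<beta>))"
    and s_pieri: "\<forall>la. kpart k la \<longrightarrow> (\<forall>i\<in>{1..k}.
                    mulh i (s la) = (\<Sum>\<mu>\<in>{\<mu>. hkstrip k \<mu> la \<and> sum_list \<mu> - sum_list la = i}. s \<mu>))"
    and i: "i \<in> {1..k}" and G: "Rel k S s f (chi f)"
  shows "Rel k S s (mulH i f) (chi (mulH i f))"
proof -
  obtain a where a: "{i. a i \<noteq> 0} \<subseteq> {b. kcomp k b}" "finite {i. a i \<noteq> 0}"
    "\<forall>x. f x = (\<Sum>i\<in>{i. a i \<noteq> 0}. a i * S i x)" "\<forall>m. chi f m = (\<Sum>i\<in>{i. a i \<noteq> 0}. a i * s (lam i) m)"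
    using G unfolding Rel_def by blast
  define A where "A = {i. a i \<noteq> 0}"
  define B where "B = (\<lambda>b. {b'. hkcstrip k i b' b})"
  have fe: "f = (\<lambda>x. \<Sum>b\<in>A. a b * S b x)" using a(3) by (auto simp: A_def)
  have ce: "chi f = (\<lambda>m. \<Sum>b\<in>A. a b * s (lam b) m)" using a(4) by (auto simp: A_def)
  have h1: "mulH i (S b) v = (\<Sum>b'\<in>B b. S b' v)" if "b \<in> A" for b v
  proof -
    have "kcomp k b" using that a(1) by (auto simp: A_def)
    then have "mulH i (S b) = (\<Sum>b'\<in>B b. S b')" using S_pieri i by (auto simp: B_def)
    then show ?thesis by (simp add: sum_fun_apply)
  qed
  have h2: "mulh i (s (lam b)) m = (\<Sum>b'\<in>B b. s (lam b') m)" if "b \<in> A" for b m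
  proof -
    have kb: "kcomp k b" using that a(1) by (auto simp: A_def)
    have "mulh i (s (lam b)) = (\<Sum>\<mu>\<in>{\<mu>. hkstrip k \<mu> (lam b) \<and> sum_list \<mu> - sum_list (lam b) = i}. s \<mu>)"
      using s_pieri i kpart_lam[OF kb] by auto
    also have "\<dots> = (\<Sum>\<mu>\<in>lam ` B b. s \<mu>)" using bij_part[OF kb] by (simp add: B_def)
    also have "\<dots> = (\<Sum>b'\<in>B b. s (lam b'))"
      using sum.reindex[OF C2[of k i b], of s] by (simp add: B_def comp_def)
    finally show ?thesis by (simp add: sum_fun_apply)
  qed
  have m1: "mulH i f = (\<lambda>v. \<Sum>b\<in>A. a b * (\<Sum>b'\<in>B b. S b' v))"
    unfolding fe mulH_sum mulH_scale using h1 by (auto intro!: sum.cong)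
  have m2: "chi (mulH i f) = (\<lambda>m. \<Sum>b\<in>A. a b * (\<Sum>b'\<in>B b. s (lam b') m))"
    unfolding chi_mulH ce mulh_sum mulh_scale using h2 by (auto intro!: sum.cong)
  have "Rel k S s (\<lambda>v. \<Sum>b\<in>A. a b * (\<Sum>b'\<in>B b. S b' v)) (\<lambda>m. \<Sum>b\<in>A. a b * (\<Sum>b'\<in>B b. s (lam b') m))"
  proof (rule Rel_sum)
    fix b assume "b \<in> A"
    have "Rel k S s (\<lambda>v. \<Sum>b'\<in>B b. S b' v) (\<lambda>m. \<Sum>b'\<in>B b. s (lam b') m)"
      by (rule Rel_sum) (auto simp: B_def hkcstrip_def intro: Rel_basis)
    then show "Rel k S s (\<lambda>v. a b * (\<Sum>b'\<in>B b. S b' v)) (\<lambda>m. a b * (\<Sum>b'\<in>B b. s (lam b') m))"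
      by (rule Rel_scale)
  qed
  then show ?thesis using m1 m2 by simp
qed

definition ew :: "nat list \<Rightarrow> nat list \<Rightarrow> rat" where
  "ew w = (\<lambda>v. if v = w then 1 else 0)"

theorem mainTheorem7:
  fixes k :: nat
    and S :: "nat list \<Rightarrow> (nat list \<Rightarrow> rat)"
    and s :: "nat list \<Rightarrow> (nat multiset \<Rightarrow> rat)"
    and \<alpha> :: "nat list"
  assumes "1 \<le> k"
    and S_basis: "is_basis (NSym_k k) {\<beta>. kcomp k \<beta>} S"
    and S_empty: "S [] = oneNS"
    and S_pieri: "\<forall>\<gamma>. kcomp k \<gamma> \<longrightarrow> (\<forall>i\<in>{1..k}.
                    mulH i (S \<gamma>) = (\<Sum>\<beta>\<in>{\<beta>. hkcstrip k i \<beta> \<gamma>}. S \<beta>))"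
    and s_basis: "is_basis (Sym_k k) {la. kpart k la} s"
    and s_empty: "s [] = oneS"
    and s_pieri: "\<forall>la. kpart k la \<longrightarrow> (\<forall>i\<in>{1..k}.
                    mulh i (s la) = (\<Sum>\<mu>\<in>{\<mu>. hkstrip k \<mu> la \<and> sum_list \<mu> - sum_list la = i}. s \<mu>))"
    and "kcomp k \<alpha>"
  shows "chi (S \<alpha>) = s (lam \<alpha>)"
proof -
  have Gw: "Rel k S s (ew w) (chi (ew w))" if "kcomp k w" for w
    using that
  proof (induction w)
    case Nil
    have "ew [] = oneNS" by (auto simp: ew_def oneNS_def)
    moreover have "lam [] = []" by (simp add: lam_def)
    ultimately show ?case using Rel_basis[of k "[]" S s] S_empty s_empty chi_one
      by (simp add: kcomp_def)
  next
    case (Cons j w)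
    have i: "j \<in> {1..k}" and kw: "kcomp k w" using Cons.prems by (auto simp: kcomp_def)
    have "ew (j # w) = mulH j (ew w)" by (auto simp: ew_def mulH_def split: list.splits)
    then show ?case using G_step[OF S_pieri s_pieri i Cons.IH[OF kw]] by simp
  qed
  have SN: "S \<alpha> \<in> NSym_k k" using S_basis assms(8) by (auto simp: is_basis_def)
  define W where "W = {w. S \<alpha> w \<noteq> 0}"
  have fW: "finite W" and kW: "\<forall>w\<in>W. kcomp k w" using SN by (auto simp: NSym_k_def fin_supp_def W_def)
  have Se: "S \<alpha> = (\<lambda>x. \<Sum>w\<in>W. S \<alpha> w * ew w x)"
  proof
    fix x
    show "S \<alpha> x = (\<Sum>w\<in>W. S \<alpha> w * ew w x)"
    proof (cases "x \<in> W")
      case True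
      then have "(\<Sum>w\<in>W. S \<alpha> w * ew w x) = (\<Sum>w\<in>{x}. S \<alpha> w * ew w x)"
        by (intro sum.mono_neutral_right) (auto simp: fW ew_def)
      then show ?thesis by (simp add: ew_def)
    next
      case False
      then show ?thesis by (auto simp: W_def ew_def intro!: sum.neutral)
    qed
  qed
  have ce: "chi (S \<alpha>) = (\<lambda>m. \<Sum>w\<in>W. S \<alpha> w * chi (ew w) m)"
    by (subst Se) (simp add: chi_sum chi_scale)
  have "Rel k S s (\<lambda>x. \<Sum>w\<in>W. S \<alpha> w * ew w x) (\<lambda>m. \<Sum>w\<in>W. S \<alpha> w * chi (ew w) m)"
    by (rule Rel_sum, rule Rel_scale, rule Gw) (use kW in auto)
  then have R: "Rel k S s (S \<alpha>) (chi (S \<alpha>))" using Se ce by simp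
  then obtain a where a: "{i. a i \<noteq> 0} \<subseteq> {b. kcomp k b}" "finite {i. a i \<noteq> 0}"
    "\<forall>x. S \<alpha> x = (\<Sum>i\<in>{i. a i \<noteq> 0}. a i * S i x)"
    "\<forall>m. chi (S \<alpha>) m = (\<Sum>i\<in>{i. a i \<noteq> 0}. a i * s (lam i) m)"
    unfolding Rel_def by blast
  define d :: "nat list \<Rightarrow> rat" where "d = (\<lambda>i. if i = \<alpha> then 1 else 0)"
  have sd: "{i. d i \<noteq> 0} = {\<alpha>}" by (auto simp: d_def)
  have uq: "\<exists>!c. {i. c i \<noteq> 0} \<subseteq> {b. kcomp k b} \<and> finite {i. c i \<noteq> 0} \<and>
                   S \<alpha> = (\<Sum>i\<in>{i. c i \<noteq> 0}. (\<lambda>x. c i * S i x))"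
    using S_basis SN unfolding is_basis_def by blast
  have pa: "{i. a i \<noteq> 0} \<subseteq> {b. kcomp k b} \<and> finite {i. a i \<noteq> 0} \<and>
                   S \<alpha> = (\<Sum>i\<in>{i. a i \<noteq> 0}. (\<lambda>x. a i * S i x))"
    using a(1,2,3) by (auto simp: sum_fun_apply)
  have pd: "{i. d i \<noteq> 0} \<subseteq> {b. kcomp k b} \<and> finite {i. d i \<noteq> 0} \<and>
                   S \<alpha> = (\<Sum>i\<in>{i. d i \<noteq> 0}. (\<lambda>x. d i * S i x))"
    using assms(8) unfolding sd by (simp add: d_def)
  have "a = d" using uq pa pd by blast
  then show ?thesis using a(4) sd by (auto simp: d_def)
qed

end
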